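(* For \(z \in \{ z \in \mathbb{C} : |\arg(z)| < \pi \}\) and \(n \in \mathbb{N}\), \[ {}_1F_1\left(\begin{matrix} 1 \\ z+1 \end{matrix}\,;\, z\right) = 1 + z + \cfrac{-z\cdot z}{(2z+2) + \cfrac{-z(z+1)}{(2z+3) + \cfrac{-z(z+2)}{(2z+4) + \cdots}}}, \] i.e. \(1+z+\mathop{\mathrm{K}}_{m=1}^{\infty}\frac{-z(m+z-1)}{m+2z+1}\), and \[ \int_0^1 (1-t)^{n-1} e^{tn}\, dt = \frac{1}{n}\left(1 + n + \mathop{\mathrm{K}}_{m=1}^{\infty}\frac{-n(m+n-1)}{m+2n+1}\right). \]
   Context: Here \(\mathop{\mathrm{K}}_{m=1}^{\infty}\frac{a_m}{b_m}\) denotes the continued fraction \(\cfrac{a_1}{b_1+\cfrac{a_2}{b_2+\cfrac{a_3}{b_3+\cdots}}}\) with partial numerators \(a_m\) and partial denominators \(b_m\); \({}_1F_1\) is the confluent hypergeometric function. *)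

theory Defs
  imports "HOL-Analysis.Analysis"
begin

definition hyp1F1 :: "complex \<Rightarrow> complex \<Rightarrow> complex \<Rightarrow> complex" where
  "hyp1F1 a b z = (\<Sum>k. pochhammer a k / pochhammer b k * z ^ k / fact k)"

text \<open>Wallis recurrences for the continued fraction K_{m>=1} a_m / b_m (with b_0 = 0):
  A_{-1} = 1, A_0 = 0, B_{-1} = 0, B_0 = 1,
  A_n = b_n A_{n-1} + a_n A_{n-2},  B_n = b_n B_{n-1} + a_n B_{n-2}.
  The n-th convergent is A_n / B_n.\<close>
fun cfA :: "(nat \<Rightarrow> 'a::field) \<Rightarrow> (nat \<Rightarrow> 'a) \<Rightarrow> nat \<Rightarrow> 'a" where
  "cfA a b 0 = 0"
| "cfA a b (Suc 0) = a 1"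
| "cfA a b (Suc (Suc n)) = b (n + 2) * cfA a b (Suc n) + a (n + 2) * cfA a b n"

fun cfB :: "(nat \<Rightarrow> 'a::field) \<Rightarrow> (nat \<Rightarrow> 'a) \<Rightarrow> nat \<Rightarrow> 'a" where
  "cfB a b 0 = 1"
| "cfB a b (Suc 0) = b 1"
| "cfB a b (Suc (Suc n)) = b (n + 2) * cfB a b (Suc n) + a (n + 2) * cfB a b n"

definition cf_converges_to :: "(nat \<Rightarrow> 'a::{field,topological_space}) \<Rightarrow> (nat \<Rightarrow> 'a) \<Rightarrow> 'a \<Rightarrow> bool" where
  "cf_converges_to a b L \<longleftrightarrow>
     (\<forall>\<^sub>F n in sequentially. cfB a b n \<noteq> 0) \<and> ((\<lambda>n. cfA a b n / cfB a b n) \<longlongrightarrow> L) sequentially"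

end

theory Submission
  imports Defs
begin

lemma J_int: "(\<lambda>t::real. (1-t)^m * exp(t*c)) integrable_on {0..1}"
  by (intro integrable_continuous_interval continuous_intros)

lemma J_rec:
  fixes c :: real
  shows "real (Suc m) * integral {0..1} (\<lambda>t. (1-t)^m * exp(t*c)) - c * integral {0..1} (\<lambda>t. (1-t)^(Suc m) * exp(t*c)) = 1"
proof -
  have d: "((\<lambda>t. -((1-t)^Suc m * exp(t*c))) has_vector_derivative
      (real (Suc m) * ((1-x)^m * exp(x*c)) - c * ((1-x)^(Suc m) * exp(x*c)))) (at x within {0..1})" for x
    unfolding has_real_derivative_iff_has_vector_derivative[symmetric]
  proof -
    have p: "((\<lambda>t. (1-t)^Suc m) has_real_derivative ((1 + real m) * ((-1) * (1-x)^m))) (at x within {0..1})"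
      by (rule DERIV_power_Suc) (auto intro!: derivative_eq_intros)
    have e: "((\<lambda>t. exp(t*c)) has_real_derivative (exp(x*c) * c)) (at x within {0..1})"
      by (auto intro!: derivative_eq_intros)
    have h1: "((\<lambda>t. -((1-t)^Suc m * exp(t*c))) has_real_derivative
        -((1 + real m) * ((-1) * (1-x)^m) * exp(x*c) + (1-x)^Suc m * (exp(x*c) * c))) (at x within {0..1})"
      using DERIV_minus[OF DERIV_mult[OF p e]] by (simp add: mult_ac)
    have h2: "-((1 + real m) * ((-1) * (1-x)^m) * exp(x*c) + (1-x)^Suc m * (exp(x*c) * c))
        = real (Suc m) * ((1-x)^m * exp(x*c)) - c * ((1-x)^(Suc m) * exp(x*c))"
      by (simp add: algebra_simps)
    show "((\<lambda>t. -((1-t)^Suc m * exp(t*c))) has_real_derivative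
        (real (Suc m) * ((1-x)^m * exp(x*c)) - c * ((1-x)^(Suc m) * exp(x*c)))) (at x within {0..1})" by (subst h2[symmetric]) (rule h1)
  qed
  have "((\<lambda>x. real (Suc m) * ((1-x)^m * exp(x*c)) - c * ((1-x)^(Suc m) * exp(x*c))) has_integral
      ((-((1-1)^Suc m * exp(1*c))) - (-((1-0)^Suc m * exp(0*c))))) {0..1}"
    by (rule fundamental_theorem_of_calculus[OF _ d]) simp
  hence "integral {0..1} (\<lambda>x. real (Suc m) * ((1-x)^m * exp(x*c)) - c * ((1-x)^(Suc m) * exp(x*c))) = 1"
    by (simp add: integral_unique)
  moreover have "integral {0..1} (\<lambda>x. real (Suc m) * ((1-x)^m * exp(x*c)) - c * ((1-x)^(Suc m) * exp(x*c)))
     = real (Suc m) * integral {0..1} (\<lambda>t. (1-t)^m * exp(t*c)) - c * integral {0..1} (\<lambda>t. (1-t)^(Suc m) * exp(t*c))"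
    by (subst integral_diff) (auto intro!: integrable_continuous_interval continuous_intros simp del: of_nat_Suc power_Suc)
  ultimately show ?thesis by simp
qed

lemma J_bounds:
  fixes c :: real assumes "c \<ge> 0"
  shows "0 \<le> integral {0..1} (\<lambda>t. (1-t)^m * exp(t*c))" "integral {0..1} (\<lambda>t. (1-t)^m * exp(t*c)) \<le> exp c"
proof -
  show "0 \<le> integral {0..1} (\<lambda>t. (1-t)^m * exp(t*c))"
    by (rule integral_nonneg[OF J_int]) auto
  have "integral {0..1} (\<lambda>t. (1-t)^m * exp(t*c)) \<le> integral {0..1} (\<lambda>t::real. exp c)"
  proof (rule integral_le[OF J_int])
    show "(\<lambda>t::real. exp c) integrable_on {0..1}" by (intro integrable_continuous_interval continuous_intros)
    fix x :: real assume x: "x \<in> {0..1}"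
    have "(1-x)^m \<le> 1" using x by (auto intro: power_le_one)
    moreover have "exp (x*c) \<le> exp c" using x assms by (simp add: mult_left_le_one_le)
    ultimately show "(1-x)^m * exp(x*c) \<le> exp c"
      using mult_mono[of "(1-x)^m" 1 "exp(x*c)" "exp c"] by simp
  qed
  thus "integral {0..1} (\<lambda>t. (1-t)^m * exp(t*c)) \<le> exp c" by simp
qed


lemma cfB_closed:
  fixes z :: "'a::field_char_0"
  shows "cfB (\<lambda>m. - z * (of_nat m + z - 1)) (\<lambda>m. of_nat m + 2*z + 1) n = of_nat (n+1) * pochhammer (z+1) n
       \<and> cfB (\<lambda>m. - z * (of_nat m + z - 1)) (\<lambda>m. of_nat m + 2*z + 1) (Suc n) = of_nat (n+2) * pochhammer (z+1) (Suc n)"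
proof (induction n)
  case 0
  then show ?case by (simp add: algebra_simps)
next
  case (Suc n)
  then show ?case
    by (simp add: pochhammer_Suc algebra_simps)
qed

definition tt :: "'a::field \<Rightarrow> nat \<Rightarrow> 'a" where
  "tt z k = z ^ k / pochhammer (z+1) k"

lemma poch_nz:
  fixes z :: "'a::field_char_0"
  assumes "\<And>j. z + of_nat (Suc j) \<noteq> 0"
  shows "pochhammer (z+1) k \<noteq> 0"
proof
  assume "pochhammer (z+1) k = 0"
  then obtain j where "z + 1 = - of_nat j" by (auto simp: pochhammer_eq_0_iff)
  hence "z + 1 + of_nat j = 0" by simp
  hence "z + of_nat (Suc j) = 0" by (simp add: algebra_simps)
  with assms show False by blast
qed

lemma step_alg:
 fixes z m P X Z d1 d2 d3 :: "'a::field"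
 assumes nz: "P\<noteq>0" "d1\<noteq>0" "d2\<noteq>0" "d3\<noteq>0" and d: "d1 = z+m+1" "d2 = z+m+2" "d3 = z+m+3"
 shows "(m + 2 + 2*z + 1) * ((m+2)*(P*d1)*(X + Z/(P*d1*d2) - 1 - z) + z*Z/d2) + (-z*(m+2+z-1)) * ((m+1)*P*(X-1-z) + Z/d1)
   = (m+3)*(P*d1*d2)*((X + Z/(P*d1*d2) + z*Z/(P*d1*d2*d3)) - 1 - z) + z*z*Z/d3"
proof -
  define Q where "Q = P*(X-1-z)"
  have l1: "(m+2)*(P*d1)*(X + Z/(P*d1*d2) - 1 - z) = (m+2)*d1*Q + (m+2)*Z/d2"
    using nz unfolding Q_def by (simp add: field_simps)
  have l2: "(m+1)*P*(X-1-z) + Z/d1 = (m+1)*Q + Z/d1" unfolding Q_def by (simp add: algebra_simps)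
  have r1: "(m+3)*(P*d1*d2)*((X + Z/(P*d1*d2) + z*Z/(P*d1*d2*d3)) - 1 - z) = (m+3)*d1*d2*Q + (m+3)*Z + (m+3)*z*Z/d3"
    using nz unfolding Q_def by (simp add: field_simps)
  have mz: "m+2+z-1 = d1" using d by simp
  have L: "(m + 2 + 2*z + 1) * ((m+2)*d1*Q + (m+2)*Z/d2 + z*Z/d2) + (-z*d1) * ((m+1)*Q + Z/d1)
        = (m+3)*d2*d1*Q + d3*Z"
  proof -
    have "(m+2)*Z/d2 + z*Z/d2 = ((m+2)*Z + z*Z)/d2" by (simp add: add_divide_distrib)
    also have "(m+2)*Z + z*Z = d2*Z" using d by (simp add: algebra_simps)
    finally have "(m+2)*Z/d2 + z*Z/d2 = Z" using nz by simp
    hence "(m+2)*d1*Q + (m+2)*Z/d2 + z*Z/d2 = (m+2)*d1*Q + Z" by (simp add: add.assoc)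
    hence "(m + 2 + 2*z + 1) * ((m+2)*d1*Q + (m+2)*Z/d2 + z*Z/d2) = (m + 2 + 2*z + 1) * ((m+2)*d1*Q + Z)"
      by simp
    moreover have "(-z*d1) * ((m+1)*Q + Z/d1) = -z*d1*(m+1)*Q - z*Z" using nz by (simp add: field_simps)
    ultimately show ?thesis using d by (simp add: algebra_simps)
  qed
  have R: "(m+3)*d1*d2*Q + (m+3)*Z + (m+3)*z*Z/d3 + z*z*Z/d3 = (m+3)*d2*d1*Q + d3*Z"
  proof -
    have "(m+3)*z*Z/d3 + z*z*Z/d3 = ((m+3)*z*Z + z*z*Z)/d3" by (simp add: add_divide_distrib)
    also have "(m+3)*z*Z + z*z*Z = d3*(z*Z)" using d by (simp add: algebra_simps)
    finally have e: "(m+3)*z*Z/d3 + z*z*Z/d3 = z*Z" using nz by simp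
    have "(m+3)*d1*d2*Q + (m+3)*Z + (m+3)*z*Z/d3 + z*z*Z/d3 = (m+3)*d1*d2*Q + (m+3)*Z + z*Z"
      using e by (simp add: add.assoc)
    thus ?thesis using d by (simp add: algebra_simps)
  qed
  show ?thesis unfolding l1 l2 r1 mz using L R by (simp add: algebra_simps)
qed

lemma cfA_closed:
  fixes z :: "'a::field_char_0"
  assumes nz: "\<And>j. z + of_nat (Suc j) \<noteq> 0"
  shows "cfA (\<lambda>m. - z * (of_nat m + z - 1)) (\<lambda>m. of_nat m + 2*z + 1) n
          = of_nat (n+1) * pochhammer (z+1) n * ((\<Sum>k<n+2. tt z k) - 1 - z) + z^(n+2) / (z + of_nat (n+1))
       \<and> cfA (\<lambda>m. - z * (of_nat m + z - 1)) (\<lambda>m. of_nat m + 2*z + 1) (Suc n)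
          = of_nat (n+2) * pochhammer (z+1) (Suc n) * ((\<Sum>k<n+3. tt z k) - 1 - z) + z^(n+3) / (z + of_nat (n+2))"
proof (induction n)
  case 0
  have "z + 1 \<noteq> 0" "z + 2 \<noteq> 0" using nz[of 0] nz[of 1] by (simp_all add: add.commute)
  have q1: "pochhammer (z+1) 1 = z+1" by simp
  have q2: "pochhammer (z+1) 2 = (z+1)*(z+2)" by (simp add: pochhammer_Suc eval_nat_numeral algebra_simps)
  have e1: "(\<Sum>k<2. tt z k) = 1 + z/(z+1)" by (simp add: tt_def eval_nat_numeral)
  have e2: "(\<Sum>k<3. tt z k) = 1 + z/(z+1) + z^2/((z+1)*(z+2))" using q2 by (simp add: tt_def eval_nat_numeral)
  have c: "2*z^2 + z^3 = z^2*(z+2)" by (simp add: algebra_simps power2_eq_square power3_eq_cube)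
  have b: "2*z^2/(z+2) + z^3/(z+2) = z^2"
    using \<open>z + 2 \<noteq> 0\<close> by (simp add: add_divide_distrib[symmetric] c)
  have a: "2*(z+1)*((1 + z/(z+1) + z^2/((z+1)*(z+2))) - 1 - z) = 2*z - 2*z*(z+1) + 2*z^2/(z+2)"
    using \<open>z + 1 \<noteq> 0\<close> \<open>z + 2 \<noteq> 0\<close> by (simp add: divide_simps) (simp add: algebra_simps power2_eq_square)
  have A1: "- z * z = 2*(z+1)*((1 + z/(z+1) + z^2/((z+1)*(z+2))) - 1 - z) + z^3/(z+2)"
    unfolding a using b by (simp add: algebra_simps power2_eq_square)
  have A0: "0 = 1*1*((1 + z/(z+1)) - 1 - z) + z^2/(z+1)"
    using \<open>z + 1 \<noteq> 0\<close> by (simp add: divide_simps) (simp add: algebra_simps power2_eq_square)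
  show ?case using A0 A1 e1 e2 q1 by (simp add: eval_nat_numeral)
next
  case (Suc n)
  define P where "P = pochhammer (z+1) n"
  define X where "X = (\<Sum>k<n+2. tt z k)"
  define Z where "Z = z^(n+2)"
  define d1 where "d1 = z + of_nat (n+1)"
  define d2 where "d2 = z + of_nat (n+2)"
  define d3 where "d3 = z + of_nat (n+3)"
  define m :: 'a where "m = of_nat n"
  have P0: "P \<noteq> 0" unfolding P_def by (rule poch_nz[OF nz])
  have n1: "d1 \<noteq> 0" unfolding d1_def using nz[of n] by simp
  have n2: "d2 \<noteq> 0" unfolding d2_def using nz[of "n+1"] by simp
  have n3: "d3 \<noteq> 0" unfolding d3_def using nz[of "n+2"] by (simp add: add_ac)
  have e1: "d1 = z+m+1" "d2 = z+m+2" "d3 = z+m+3" unfolding d1_def d2_def d3_def m_def by (simp_all add: add_ac)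
  have p1: "pochhammer (z+1) (Suc n) = P * d1" unfolding P_def d1_def by (simp add: pochhammer_Suc algebra_simps)
  have p2: "pochhammer (z+1) (Suc (Suc n)) = P * d1 * d2"
    unfolding P_def d1_def d2_def by (simp add: pochhammer_Suc algebra_simps)
  have p3: "pochhammer (z+1) (Suc (Suc (Suc n))) = P * d1 * d2 * d3"
    unfolding P_def d1_def d2_def d3_def by (simp add: pochhammer_Suc algebra_simps)
  have s3: "(\<Sum>k<n+3. tt z k) = X + Z / (P * d1 * d2)"
    unfolding X_def Z_def using p2 by (simp add: tt_def numeral_3_eq_3)
  have s4: "(\<Sum>k<n+4. tt z k) = X + Z / (P * d1 * d2) + z * Z / (P * d1 * d2 * d3)"
    using s3 p3 unfolding Z_def by (simp add: tt_def eval_nat_numeral)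
  have IH1: "cfA (\<lambda>m. - z * (of_nat m + z - 1)) (\<lambda>m. of_nat m + 2*z + 1) n
       = (m+1) * P * (X - 1 - z) + Z / d1"
    using Suc.IH unfolding P_def X_def Z_def d1_def m_def by simp
  have IH2: "cfA (\<lambda>m. - z * (of_nat m + z - 1)) (\<lambda>m. of_nat m + 2*z + 1) (Suc n)
       = (m+2) * (P * d1) * (X + Z / (P * d1 * d2) - 1 - z) + z * Z / d2"
    using Suc.IH p1 s3 unfolding Z_def d2_def m_def by (simp add: eval_nat_numeral)
  have "cfA (\<lambda>m. - z * (of_nat m + z - 1)) (\<lambda>m. of_nat m + 2*z + 1) (Suc (Suc n))
     = (m + 2 + 2*z + 1) * cfA (\<lambda>m. - z * (of_nat m + z - 1)) (\<lambda>m. of_nat m + 2*z + 1) (Suc n)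
       + (-z*(m+2+z-1)) * cfA (\<lambda>m. - z * (of_nat m + z - 1)) (\<lambda>m. of_nat m + 2*z + 1) n"
    unfolding m_def by simp
  also have "\<dots> = (m+3)*(P*d1*d2)*((X + Z/(P*d1*d2) + z*Z/(P*d1*d2*d3)) - 1 - z) + z*z*Z/d3"
    unfolding IH1 IH2 by (rule step_alg[OF P0 n1 n2 n3 e1])
  finally have goal: "cfA (\<lambda>m. - z * (of_nat m + z - 1)) (\<lambda>m. of_nat m + 2*z + 1) (Suc (Suc n))
     = (m+3)*(P*d1*d2)*((X + Z/(P*d1*d2) + z*Z/(P*d1*d2*d3)) - 1 - z) + z*z*Z/d3" .
  have f1: "z ^ (Suc n + 3) = z*z*Z" unfolding Z_def by (simp add: eval_nat_numeral)
  have f2: "(of_nat (Suc n + 2)::'a) = m + 3" "z + of_nat (Suc n + 2) = d3" unfolding m_def d3_def by simp_all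
  have f3: "(\<Sum>k<Suc n+3. tt z k) = X + Z / (P * d1 * d2) + z * Z / (P * d1 * d2 * d3)"
    using s4 by (simp add: eval_nat_numeral)
  have c2: "cfA (\<lambda>m. - z * (of_nat m + z - 1)) (\<lambda>m. of_nat m + 2*z + 1) (Suc (Suc n))
     = of_nat (Suc n + 2) * pochhammer (z+1) (Suc (Suc n)) * ((\<Sum>k<Suc n+3. tt z k) - 1 - z) + z^(Suc n+3) / (z + of_nat (Suc n+2))"
    unfolding f1 f2(2) f2(1) f3 p2 goal using e1(3) by (simp add: add.assoc)
  have ee: "Suc n + 1 = n + 2" "Suc n + 2 = n + 3" by simp_all
  have c1: "cfA (\<lambda>m. - z * (of_nat m + z - 1)) (\<lambda>m. of_nat m + 2*z + 1) (Suc n)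
     = of_nat (Suc n + 1) * pochhammer (z+1) (Suc n) * ((\<Sum>k<Suc n+2. tt z k) - 1 - z) + z^(Suc n+2) / (z + of_nat (Suc n+1))"
    unfolding ee using Suc.IH by blast
  show ?case using c1 c2 by blast
qed

lemma tt_Suc:
  fixes z :: "'a::field_char_0"
  shows "tt z (Suc n) = tt z n * (z / (z + of_nat (Suc n)))"
  unfolding tt_def by (simp add: pochhammer_Suc algebra_simps)

lemma tt_summable:
  fixes z :: "'a::{real_normed_field,banach}"
  assumes nz: "\<And>j. z + of_nat (Suc j) \<noteq> 0"
  shows "summable (tt z)"
proof (rule summable_ratio_test[where c="1/2" and N="nat \<lceil>3 * norm z\<rceil>"])
  fix n assume n: "n \<ge> nat \<lceil>3 * norm z\<rceil>"
  hence h: "real (Suc n) \<ge> 3 * norm z" by linarith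
  have "norm (of_nat (Suc n) :: 'a) \<le> norm (z + of_nat (Suc n)) + norm z"
    using norm_triangle_ineq4[of "z + of_nat (Suc n)" z] by simp
  hence w: "2 * norm z \<le> norm (z + of_nat (Suc n))" using h norm_of_nat[of "Suc n", where ?'a='a] by linarith
  have pos: "norm (z + of_nat (Suc n)) > 0" using nz[of n] by simp
  have q: "norm z / norm (z + of_nat (Suc n)) \<le> 1/2"
    using w pos by (simp add: divide_simps)
  have "norm (tt z (Suc n)) = norm (tt z n) * (norm z / norm (z + of_nat (Suc n)))"
    by (simp add: tt_Suc norm_mult norm_divide)
  also have "\<dots> \<le> norm (tt z n) * (1/2)" by (rule mult_left_mono[OF q]) simp
  finally show "norm (tt z (Suc n)) \<le> 1/2 * norm (tt z n)" by simp
qed simp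

lemma aux_div:
  fixes N P d S Y z :: "'a::field"
  assumes "N\<noteq>0" "P\<noteq>0" "d\<noteq>0"
  shows "(N*P*S + z*Y/d)/(N*P) = S + z*(Y/(P*d))*(1/N)"
  using assms by (simp add: field_simps)

lemma cf_conv:
  fixes z :: "'a::{real_normed_field,banach}"
  assumes nz: "\<And>j. z + of_nat (Suc j) \<noteq> 0"
  shows "cf_converges_to (\<lambda>m. - z * (of_nat m + z - 1)) (\<lambda>m. of_nat m + 2*z + 1) (suminf (tt z) - 1 - z)"
  unfolding cf_converges_to_def
proof
  have B: "cfB (\<lambda>m. - z * (of_nat m + z - 1)) (\<lambda>m. of_nat m + 2*z + 1) n = of_nat (n+1) * pochhammer (z+1) n" for n
    using cfB_closed by blast
  have Bnz: "cfB (\<lambda>m. - z * (of_nat m + z - 1)) (\<lambda>m. of_nat m + 2*z + 1) n \<noteq> 0" for n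
    unfolding B using poch_nz[OF nz] by (simp del: of_nat_Suc)
  thus "\<forall>\<^sub>F n in sequentially. cfB (\<lambda>m. - z * (of_nat m + z - 1)) (\<lambda>m. of_nat m + 2*z + 1) n \<noteq> 0"
    by simp
  have eq: "cfA (\<lambda>m. - z * (of_nat m + z - 1)) (\<lambda>m. of_nat m + 2*z + 1) n / cfB (\<lambda>m. - z * (of_nat m + z - 1)) (\<lambda>m. of_nat m + 2*z + 1) n
     = ((\<Sum>k<n+2. tt z k) - 1 - z) + z * tt z (n+1) * (1 / of_nat (n+1))" for n
  proof -
    have P: "pochhammer (z+1) n \<noteq> 0" by (rule poch_nz[OF nz])
    have d: "z + of_nat (n+1) \<noteq> 0" using nz[of n] by simp
    have N: "(of_nat (n+1) :: 'a) \<noteq> 0" by (simp del: of_nat_Suc)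
    have t: "tt z (n+1) = z^(n+1) / (pochhammer (z+1) n * (z + of_nat (n+1)))"
      unfolding tt_def by (simp add: pochhammer_Suc algebra_simps)
    have zz: "z^(n+2) = z * z^(n+1)" by simp
    show ?thesis unfolding B cfA_closed[OF nz, of n, THEN conjunct1] t zz
      by (rule aux_div[OF N P d])
  qed
  have L1: "(\<lambda>n. \<Sum>k<n+2. tt z k) \<longlonglongrightarrow> suminf (tt z)"
    using LIMSEQ_ignore_initial_segment[OF summable_LIMSEQ[OF tt_summable[OF nz]], of 2] .
  have L2: "(\<lambda>n. tt z (n+1)) \<longlonglongrightarrow> 0"
    using LIMSEQ_ignore_initial_segment[OF summable_LIMSEQ_zero[OF tt_summable[OF nz]], of 1] .
  have L3: "(\<lambda>n. 1 / of_nat (n+1) :: 'a) \<longlonglongrightarrow> 0"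
    using LIMSEQ_ignore_initial_segment[OF lim_1_over_n, of 1] .
  have "(\<lambda>n. ((\<Sum>k<n+2. tt z k) - 1 - z) + z * tt z (n+1) * (1 / of_nat (n+1))) \<longlonglongrightarrow> (suminf (tt z) - 1 - z) + z * 0 * 0"
    by (intro tendsto_intros L1 L2 L3)
  thus "(\<lambda>n. cfA (\<lambda>m. - z * (of_nat m + z - 1)) (\<lambda>m. of_nat m + 2*z + 1) n / cfB (\<lambda>m. - z * (of_nat m + z - 1)) (\<lambda>m. of_nat m + 2*z + 1) n) \<longlonglongrightarrow> suminf (tt z) - 1 - z"
    unfolding eq by simp
qed

lemma J_series:
  fixes n :: nat
  assumes n: "n \<ge> 1"
  shows "real n * integral {0..1} (\<lambda>t. (1-t)^(n-1) * exp(t * real n)) = suminf (tt (real n))"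
proof -
  define c where "c = real n"
  define J where "J m = integral {0..1} (\<lambda>t. (1-t)^m * exp(t * c))" for m
  have rec: "real (Suc m) * J m - c * J (Suc m) = 1" for m unfolding J_def by (rule J_rec)
  have claim: "c * J (n-1) = (\<Sum>k\<le>K. tt c k) + tt c K * c * J (n+K)" for K
  proof (induction K)
    case 0
    have "real (Suc (n-1)) * J (n-1) - c * J (Suc (n-1)) = 1" by (rule rec)
    moreover have "Suc (n-1) = n" using n by simp
    ultimately show ?case unfolding c_def by (simp add: tt_def)
  next
    case (Suc K)
    have r: "real (Suc (n+K)) * J (n+K) - c * J (Suc (n+K)) = 1" by (rule rec)
    have cpos: "c + of_nat (Suc K) = real (Suc (n+K))" unfolding c_def by simp
    have pos: "real (Suc (n+K)) \<noteq> 0" by simp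
    have "tt c K * c * J (n+K) = tt c K * (c / real (Suc (n+K))) * (real (Suc (n+K)) * J (n+K))"
      using pos by simp
    also have "real (Suc (n+K)) * J (n+K) = 1 + c * J (Suc (n+K))" using r by simp
    finally have "tt c K * c * J (n+K) = tt c (Suc K) + tt c (Suc K) * c * J (n + Suc K)"
      unfolding tt_Suc cpos by (simp add: algebra_simps add_divide_distrib)
    thus ?case using Suc.IH by simp
  qed
  have nzc: "c + of_nat (Suc j) \<noteq> 0" for j unfolding c_def by (simp del: of_nat_Suc)
  have sm: "summable (tt c)" by (rule tt_summable[OF nzc])
  have Jb: "0 \<le> J m" "J m \<le> exp c" for m unfolding J_def using J_bounds[of c m] c_def by auto
  have rem: "(\<lambda>K. tt c K * c * J (n+K)) \<longlonglongrightarrow> 0"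
  proof (rule Lim_null_comparison)
    show "\<forall>\<^sub>F K in sequentially. norm (tt c K * c * J (n+K)) \<le> norm (tt c K) * (c * exp c)"
    proof (intro always_eventually allI)
      fix K
      have "norm (tt c K * c * J (n+K)) = norm (tt c K) * (c * J (n+K))"
        using Jb[of "n+K"] unfolding c_def by (simp add: abs_mult)
      also have "\<dots> \<le> norm (tt c K) * (c * exp c)"
        using Jb[of "n+K"] unfolding c_def by (intro mult_left_mono) auto
      finally show "norm (tt c K * c * J (n+K)) \<le> norm (tt c K) * (c * exp c)" .
    qed
    have "(\<lambda>K. norm (tt c K) * (c * exp c)) \<longlonglongrightarrow> norm (0::real) * (c * exp c)"
      by (intro tendsto_intros summable_LIMSEQ_zero[OF sm])
    thus "(\<lambda>K. norm (tt c K) * (c * exp c)) \<longlonglongrightarrow> 0" by simp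
  qed
  have "(\<lambda>K. (\<Sum>k\<le>K. tt c k) + tt c K * c * J (n+K)) \<longlonglongrightarrow> suminf (tt c) + 0"
    by (intro tendsto_add summable_LIMSEQ'[OF sm] rem)
  hence "(\<lambda>K. c * J (n-1)) \<longlonglongrightarrow> suminf (tt c)" unfolding claim[symmetric] by simp
  hence "c * J (n-1) = suminf (tt c)" by (rule LIMSEQ_const_iff[THEN iffD1])
  thus ?thesis unfolding J_def c_def .
qed

lemma hyp_eq:
  shows "hyp1F1 1 (z+1) z = suminf (tt z)"
  unfolding hyp1F1_def tt_def by (simp add: pochhammer_fact[symmetric])

lemma nz_complex:
  fixes z :: complex
  assumes "\<bar>Arg z\<bar> < pi"
  shows "z + of_nat (Suc j) \<noteq> 0"
proof
  assume "z + of_nat (Suc j) = 0"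
  hence "z = - of_nat (Suc j)" by (rule add_eq_0_iff2[THEN iffD1])
  also have "\<dots> = of_real (- real (Suc j))" by simp
  finally have "Arg z = Arg (of_real (- real (Suc j)))" by simp
  also have "\<dots> = pi" by (subst Arg_of_real) simp
  finally have "Arg z = pi" .
  with assms show False by simp
qed


theorem corollary3p2:
  fixes z :: complex and n :: nat
  assumes "z \<noteq> 0" and "\<bar>Arg z\<bar> < pi" and "n \<ge> 1"
  shows "(\<exists>L. cf_converges_to (\<lambda>m. - z * (of_nat m + z - 1)) (\<lambda>m. of_nat m + 2 * z + 1) L
              \<and> hyp1F1 1 (z + 1) z = 1 + z + L)
       \<and> (\<exists>L. cf_converges_to (\<lambda>m. - real n * (real m + real n - 1)) (\<lambda>m. real m + 2 * real n + 1) L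
              \<and> integral {0..1} (\<lambda>t::real. (1 - t) ^ (n - 1) * exp (t * real n))
                  = (1 + real n + L) / real n)"
proof -
  have nz: "\<And>j. z + of_nat (Suc j) \<noteq> 0" using nz_complex[OF assms(2)] .
  have P1: "\<exists>L. cf_converges_to (\<lambda>m. - z * (of_nat m + z - 1)) (\<lambda>m. of_nat m + 2 * z + 1) L
              \<and> hyp1F1 1 (z + 1) z = 1 + z + L"
    by (intro exI[of _ "suminf (tt z) - 1 - z"] conjI cf_conv[OF nz]) (simp add: hyp_eq)
  have nzr: "\<And>j. real n + of_nat (Suc j) \<noteq> 0" by (simp del: of_nat_Suc)
  have P2: "\<exists>L. cf_converges_to (\<lambda>m. - real n * (real m + real n - 1)) (\<lambda>m. real m + 2 * real n + 1) L
              \<and> integral {0..1} (\<lambda>t::real. (1 - t) ^ (n - 1) * exp (t * real n))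
                  = (1 + real n + L) / real n"
  proof (intro exI[of _ "suminf (tt (real n)) - 1 - real n"] conjI)
    show "cf_converges_to (\<lambda>m. - real n * (real m + real n - 1)) (\<lambda>m. real m + 2 * real n + 1) (suminf (tt (real n)) - 1 - real n)"
      using cf_conv[OF nzr] by simp
    have "real n \<noteq> 0" using assms(3) by simp
    thus "integral {0..1} (\<lambda>t::real. (1 - t) ^ (n - 1) * exp (t * real n))
                  = (1 + real n + (suminf (tt (real n)) - 1 - real n)) / real n"
      using J_series[OF assms(3)] by (simp add: field_simps)
  qed
  show ?thesis using P1 P2 by blast
qed

end
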